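(* Let $\rho\in\{1/2,1\}$, let $s>0$ and $\eta>0$ be real numbers, let $q\in\mathbb{C}$, and let $\epsilon$ be real with $1<\epsilon\le 1+\rho$. Define the real cubic polynomial $$f(\gamma) = -\gamma^3\eta s^2 - \gamma^2\big[(1-\epsilon+\rho)s^2 + 2\eta s\big] + \gamma\big[2(\epsilon-1)s - s\rho + \rho|q|^2 - \eta\big] + (\epsilon-1).$$ Then $f$ has a positive root of multiplicity one or three (and no other positive root).
   Context: The polynomial $f$ satisfies $f(\gamma)=\gamma(1+\gamma s)^2\ell'(\gamma)$, where $\ell(\gamma) = -\rho\log(1+\gamma s) + \rho|q|^2/(\gamma^{-1}+s) + (\epsilon-1)\log\gamma - \eta\gamma$ for $\gamma>0$. Here $\rho=1/2$ corresponds to a real and $\rho=1$ to a complex signal model, $\epsilon$ is a gamma shape parameter and $\eta>0$ a gamma rate parameter. *)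

theory Defs
  imports Complex_Main "HOL-Computational_Algebra.Polynomial"
begin

definition cubic_f :: "real \<Rightarrow> real \<Rightarrow> real \<Rightarrow> complex \<Rightarrow> real \<Rightarrow> real poly" where
  "cubic_f \<rho> s \<eta> q \<epsilon> =
     [: \<epsilon> - 1,
        2 * (\<epsilon> - 1) * s - s * \<rho> + \<rho> * (cmod q)\<^sup>2 - \<eta>,
        - ((1 - \<epsilon> + \<rho>) * s\<^sup>2 + 2 * \<eta> * s),
        - (\<eta> * s\<^sup>2) :]"

end

theory Submission
  imports Defs
begin

lemma cubic_gen:
  fixes a0 a1 a2 a3 :: real
  assumes h0: "a0 > 0" and h2: "a2 \<le> 0" and h3: "a3 < 0"
  defines "p \<equiv> [: a0, a1, a2, a3 :]"
  shows "\<exists>\<gamma>>0. poly p \<gamma> = 0 \<and> order \<gamma> p \<in> {1, 3}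
           \<and> (\<forall>\<delta>>0. poly p \<delta> = 0 \<longrightarrow> \<delta> = \<gamma>)"
proof -
  have pe: "poly p x = a0 + x * (a1 + x * (a2 + x * a3))" for x
    by (simp add: p_def)
  define M where "M = 1 + (a0 + \<bar>a1\<bar> + 1) / (- a3)"
  have Mge: "(a0 + \<bar>a1\<bar> + 1) / (- a3) \<le> M" and M1: "M \<ge> 1"
  proof -
    have "(a0 + \<bar>a1\<bar> + 1) / (- a3) \<ge> 0" using h0 h3 by (intro divide_nonneg_pos) auto
    thus "(a0 + \<bar>a1\<bar> + 1) / (- a3) \<le> M" "M \<ge> 1" by (auto simp: M_def)
  qed
  define b where "b = \<bar>a1\<bar>"
  define c where "c = a0 + b + 1"
  have "- a3 * M \<ge> c"
    using Mge h3 M1 unfolding c_def b_def by (smt (verit) divide_le_eq mult.commute)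
  hence F0: "- a3 * M * (M * M) \<ge> c * (M * M)"
    using M1 mult_right_mono[of c "- a3 * M" "M*M"] by simp
  have F1: "c * (M * M) \<ge> c * M"
  proof -
    have "M \<le> M * M" using M1 mult_right_mono[of 1 M M] by simp
    thus ?thesis using h0 unfolding c_def b_def by (intro mult_left_mono) auto
  qed
  have F2: "a2 * M * M \<le> 0" using h2 M1 by (simp add: mult_nonpos_nonneg)
  have F3: "a1 * M \<le> b * M" using M1 unfolding b_def by (simp add: mult_right_mono)
  have F4: "a0 * M \<ge> a0" using M1 h0 by simp
  have F5: "c * M = a0 * M + b * M + M" unfolding c_def by (simp add: algebra_simps)
  have F6: "poly p M = a0 + a1 * M + a2 * M * M + a3 * M * (M * M)" unfolding pe by (simp add: algebra_simps)
  have F7: "- a3 * M * (M * M) = - (a3 * M * (M * M))" by simp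
  have G1: "a3 * M * (M * M) \<le> - (c * M)" using F0 F1 F7 by linarith
  have G2: "poly p M \<le> a0 + b * M - c * M" using F6 F2 F3 G1 by linarith
  have "poly p M < 0" using G2 F5 F4 M1 by linarith
  moreover have "poly p 0 > 0" using h0 pe by simp
  ultimately obtain g where g: "0 < g" "g < M" "poly p g = 0"
    using poly_IVT_neg[of 0 M p] M1 by auto
  have pne: "p \<noteq> 0" using h0 by (auto simp: p_def)
  have dp: "poly (pderiv p) x = a1 + x * (2 * a2 + x * (3 * a3))" for x
    by (simp add: p_def pderiv_pCons algebra_simps)
  have "g * poly (pderiv p) g = g * poly (pderiv p) g - poly p g" using g by simp
  also have "\<dots> = - a0 + a2 * g * g + 2 * a3 * g * g * g"
    unfolding pe dp by (simp add: algebra_simps)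
  also have "\<dots> < 0"
  proof -
    have "a2 * g * g \<le> 0" using h2 g by (simp add: mult_nonpos_nonneg)
    moreover have "a3 * g * g * g < 0" using h3 g by (simp add: mult_neg_pos)
    ultimately show ?thesis using h0 by linarith
  qed
  finally have "poly (pderiv p) g \<noteq> 0" by auto
  hence "order g (pderiv p) = 0" by (simp add: order_root)
  hence ord: "order g p = 1" using order_pderiv[OF pne g(3)] by simp
  have uniq: "d = g" if d: "d > 0" "poly p d = 0" for d
  proof (rule ccontr)
    assume "d \<noteq> g"
    have key: "\<And>x y. 0 < x \<Longrightarrow> x < y \<Longrightarrow> poly p x = 0 \<Longrightarrow> poly p y = 0 \<Longrightarrow> False"
    proof -
      fix x y :: real assume xy: "0 < x" "x < y" "poly p x = 0" "poly p y = 0"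
      have "y * poly p x - x * poly p y = (y - x) * (a0 - a2 * x * y - a3 * x * y * (x + y))"
        unfolding pe by (simp add: algebra_simps)
      moreover have "a2 * x * y \<le> 0" using h2 xy by (simp add: mult_nonpos_nonneg)
      moreover have "a3 * x * y * (x + y) < 0" using h3 xy by (simp add: mult_neg_pos)
      moreover have "(y - x) * (a0 - a2 * x * y - a3 * x * y * (x + y)) > 0"
        using calculation h0 xy by (intro mult_pos_pos) linarith+
      ultimately show False using xy by simp
    qed
    show False using key[of d g] key[of g d] d g \<open>d \<noteq> g\<close> by (cases "d < g") auto
  qed
  have "order g p \<in> {1, 3}" using ord by simp
  moreover have "\<forall>\<delta>>0. poly p \<delta> = 0 \<longrightarrow> \<delta> = g" using uniq by blast
  ultimately show ?thesis using g(1) g(3) by blast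
qed

theorem lemma2:
  fixes \<rho> s \<eta> \<epsilon> :: real and q :: complex
  assumes "\<rho> = 1/2 \<or> \<rho> = 1"
    and "s > 0" and "\<eta> > 0"
    and "1 < \<epsilon>" and "\<epsilon> \<le> 1 + \<rho>"
  shows "\<exists>\<gamma>>0. poly (cubic_f \<rho> s \<eta> q \<epsilon>) \<gamma> = 0
           \<and> order \<gamma> (cubic_f \<rho> s \<eta> q \<epsilon>) \<in> {1, 3}
           \<and> (\<forall>\<delta>>0. poly (cubic_f \<rho> s \<eta> q \<epsilon>) \<delta> = 0 \<longrightarrow> \<delta> = \<gamma>)"
proof -
  have a: "(1 - \<epsilon> + \<rho>) * s\<^sup>2 \<ge> 0" using assms by simp
  have b: "\<eta> * s > 0" "\<eta> * s\<^sup>2 > 0" using assms by simp_all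
  have h0: "\<epsilon> - 1 > 0" using assms by simp
  have h2: "- ((1 - \<epsilon> + \<rho>) * s\<^sup>2 + 2 * \<eta> * s) \<le> 0" using a b by simp
  have h3: "- (\<eta> * s\<^sup>2) < 0" using b by simp
  show ?thesis unfolding cubic_f_def
    using cubic_gen[OF h0 h2 h3, of "2 * (\<epsilon> - 1) * s - s * \<rho> + \<rho> * (cmod q)\<^sup>2 - \<eta>"] .
qed

end
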